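(* Consider the R-model with $f(\tau)=\sqrt\tau$, $g(\tau)=\sqrt\tau\ln\tau$ ($\tau>0$) and $\alpha=a/b$ non-constant. Then $d\chi\wedge d\pi=0$ (with $\chi=\dot p/\dot\rho$, $\pi=p/\rho$) if and only if $\beta=\alpha+\tilde c$ for a constant $\tilde c$ (necessarily $\tilde c\neq0$), where $\beta=a'/b'$. In that case $b(r)=e^{\alpha(r)/\tilde c}$ up to a constant factor, $p=\frac{1}{3\tau^2}$ and $$\rho=\frac{1}{3\tau^2}\frac{(2+\alpha+\ln\tau)(2+\alpha+\tilde c+\ln\tau)}{(\alpha+\ln\tau)(\alpha+\tilde c+\ln\tau)}.$$
   Context: An R-model admitting an orthogonal flat synchronisation is the metric $ds^2=-d\tau^2+(\partial_rY)^2dr^2+Y^2d\Omega^2$ ($d\Omega^2$ the unit 2-sphere metric), with $Y=Z^{2/3}$, $Z(\tau,r)=a(r)f(\tau)+b(r)g(\tau)$, where $f,g$ satisfy $\ddot f/f=\ddot g/g=-\frac34p(\tau)$ and $\dot gf-\dot fg=1$. It is a perfect fluid with $u=\partial_\tau$, $p=-\frac43\ddot f/f$, $\rho=\frac43\frac{\dot Z\,\dot Z'}{Z\,Z'}$ (prime $=\partial_r$, dot $=\partial_\tau$). Functions $a,b$ with $b\neq0$, $b'\neq0$; $\alpha=a/b$, $\beta=a'/b'$. *)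

theory Defs
  imports "HOL-Analysis.Analysis"
begin

definition smooth_on :: "real set \<Rightarrow> (real \<Rightarrow> real) \<Rightarrow> bool" where
  "smooth_on U h \<longleftrightarrow> (\<forall>n. \<forall>r\<in>U. ((deriv ^^ n) h) differentiable (at r))"

text \<open>R-model quantities, as functions of (tau, r). Dot = partial in tau, prime = partial in r.\<close>
definition RZ :: "(real \<Rightarrow> real) \<Rightarrow> (real \<Rightarrow> real) \<Rightarrow> (real \<Rightarrow> real) \<Rightarrow> (real \<Rightarrow> real)
    \<Rightarrow> real \<Rightarrow> real \<Rightarrow> real" where
  "RZ f g a b \<tau> r = a r * f \<tau> + b r * g \<tau>"

definition Rp :: "(real \<Rightarrow> real) \<Rightarrow> real \<Rightarrow> real" where
  "Rp f \<tau> = - 4 / 3 * deriv (deriv f) \<tau> / f \<tau>"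

definition Rrho :: "(real \<Rightarrow> real) \<Rightarrow> (real \<Rightarrow> real) \<Rightarrow> (real \<Rightarrow> real) \<Rightarrow> (real \<Rightarrow> real)
    \<Rightarrow> real \<Rightarrow> real \<Rightarrow> real" where
  "Rrho f g a b \<tau> r =
     (let Z = RZ f g a b;
          Zdot = deriv (\<lambda>t. Z t r) \<tau>;
          Zpr = deriv (\<lambda>s. Z \<tau> s) r;
          Zdotpr = deriv (\<lambda>s. deriv (\<lambda>t. Z t s) \<tau>) r
      in 4 / 3 * (Zdot * Zdotpr) / (Z \<tau> r * Zpr))"

definition Rchi where
  "Rchi f g a b \<tau> r = deriv (Rp f) \<tau> / deriv (\<lambda>t. Rrho f g a b t r) \<tau>"

definition Rpi where
  "Rpi f g a b \<tau> r = Rp f \<tau> / Rrho f g a b \<tau> r"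

text \<open>Coordinate expression of the 2-form dF \<and> dG in coordinates (tau, r):
  (dF \<and> dG) = (F_tau G_r - F_r G_tau) d tau \<and> d r.\<close>
definition wedge_coeff :: "(real \<Rightarrow> real \<Rightarrow> real) \<Rightarrow> (real \<Rightarrow> real \<Rightarrow> real) \<Rightarrow> real \<Rightarrow> real \<Rightarrow> real" where
  "wedge_coeff F G \<tau> r =
     deriv (\<lambda>t. F t r) \<tau> * deriv (\<lambda>s. G \<tau> s) r - deriv (\<lambda>s. F \<tau> s) r * deriv (\<lambda>t. G t r) \<tau>"

text \<open>The regular domain: tau > 0, r in U, where Z, Z', rho and rho-dot are nonzero
  (so that the metric is nondegenerate and chi, pi are defined).\<close>
definition Rdom where
  "Rdom f g a b U = {(\<tau>, r). \<tau> > 0 \<and> r \<in> U \<and> RZ f g a b \<tau> r \<noteq> 0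
      \<and> deriv (\<lambda>s. RZ f g a b \<tau> s) r \<noteq> 0 \<and> Rrho f g a b \<tau> r \<noteq> 0
      \<and> deriv (\<lambda>t. Rrho f g a b t r) \<tau> \<noteq> 0}"

end

theory Submission
  imports Defs
begin

lemma deriv_sqrt_pos: "t > 0 \<Longrightarrow> deriv (\<lambda>t. sqrt t) t = 1 / (2 * sqrt t)"
  by (rule DERIV_imp_deriv) (auto intro!: derivative_eq_intros simp: field_simps)

lemma Rp_sqrt: assumes "t > 0" shows "Rp (\<lambda>t. sqrt t) t = 1 / (3 * t^2)"
proof -
  have "((\<lambda>x. 1 / (2 * sqrt x)) has_real_derivative (- 1 / (4 * t * sqrt t))) (at t)"
    using assms by (auto intro!: derivative_eq_intros simp: field_simps power2_eq_square)
  then have "(deriv (\<lambda>t. sqrt t) has_real_derivative (- 1 / (4 * t * sqrt t))) (at t)"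
    by (rule has_field_derivative_transform_within_open[where S="{0<..}"]) (use assms deriv_sqrt_pos in auto)
  then have "deriv (deriv (\<lambda>t. sqrt t)) t = - 1 / (4 * t * sqrt t)" by (rule DERIV_imp_deriv)
  then have "deriv (deriv (\<lambda>t. sqrt t)) t / sqrt t = - 1 / (4 * t * (sqrt t * sqrt t))" by simp
  also have "sqrt t * sqrt t = t" using assms by simp
  finally show ?thesis using assms unfolding Rp_def by (simp add: field_simps power2_eq_square)
qed

lemma deriv_Rp_sqrt: assumes "t > 0" shows "deriv (Rp (\<lambda>t. sqrt t)) t = - 2 / (3 * t^3)"
proof -
  have "((\<lambda>x. 1 / (3 * x^2)) has_real_derivative (- 2 / (3 * t^3))) (at t)"
    using assms by (auto intro!: derivative_eq_intros simp: field_simps power2_eq_square power3_eq_cube)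
  then have "(Rp (\<lambda>t. sqrt t) has_real_derivative (- 2 / (3 * t^3))) (at t)"
    by (rule has_field_derivative_transform_within_open[where S="{0<..}"]) (use assms Rp_sqrt in auto)
  then show ?thesis by (rule DERIV_imp_deriv)
qed

lemma Zdot: assumes "t > 0"
  shows "deriv (\<lambda>t. RZ (\<lambda>t. sqrt t) (\<lambda>t. sqrt t * ln t) a b t s) t = (a s + b s * (ln t + 2)) / (2 * sqrt t)"
  unfolding RZ_def
  by (rule DERIV_imp_deriv) (use assms in \<open>auto intro!: derivative_eq_intros simp: field_simps\<close>)

lemma Zpr: assumes "a differentiable at r" "b differentiable at r"
  shows "deriv (\<lambda>s. RZ (\<lambda>t. sqrt t) (\<lambda>t. sqrt t * ln t) a b t s) r = sqrt t * (deriv a r + deriv b r * ln t)"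
  unfolding RZ_def
  by (rule DERIV_imp_deriv) (use assms in \<open>auto intro!: derivative_eq_intros simp: field_simps DERIV_deriv_iff_real_differentiable[symmetric]\<close>)

lemma Zdotpr: assumes "t > 0" "a differentiable at r" "b differentiable at r"
  shows "deriv (\<lambda>s. deriv (\<lambda>t. RZ (\<lambda>t. sqrt t) (\<lambda>t. sqrt t * ln t) a b t s) t) r = (deriv a r + deriv b r * (ln t + 2)) / (2 * sqrt t)"
  unfolding Zdot[OF assms(1)]
  by (rule DERIV_imp_deriv) (use assms in \<open>auto intro!: derivative_eq_intros simp: field_simps DERIV_deriv_iff_real_differentiable[symmetric]\<close>)

lemma Zdotpr': assumes "t > 0" "a differentiable at r" "b differentiable at r"
  shows "deriv (\<lambda>s. (a s + b s * (ln t + 2)) / (2 * sqrt t)) r = (deriv a r + deriv b r * (ln t + 2)) / (2 * sqrt t)"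
  by (rule DERIV_imp_deriv) (use assms in \<open>auto intro!: derivative_eq_intros simp: field_simps DERIV_deriv_iff_real_differentiable[symmetric]\<close>)

definition Fn :: "real \<Rightarrow> real \<Rightarrow> real" where "Fn P Q = (1 + 2*P) * (1 + 2*Q)"
definition Dn :: "real \<Rightarrow> real \<Rightarrow> real" where
  "Dn P Q = -2*(1+2*P)*(1+2*Q) - 2*P^2*(1+2*Q) - 2*Q^2*(1+2*P)"

lemma Rrho_ab: assumes "t > 0" "a differentiable at r" "b differentiable at r" "b r \<noteq> 0" "deriv b r \<noteq> 0"
  shows "Rrho (\<lambda>t. sqrt t) (\<lambda>t. sqrt t * ln t) a b t r =
    1 / (3 * t^2) * ((2 + a r / b r + ln t) * (2 + deriv a r / deriv b r + ln t))
       / ((a r / b r + ln t) * (deriv a r / deriv b r + ln t))"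
proof -
  define u where "u = a r / b r + ln t"
  define v where "v = deriv a r / deriv b r + ln t"
  have ha: "a r = b r * (u - ln t)" using assms(4) by (simp add: u_def field_simps)
  have hb: "deriv a r = deriv b r * (v - ln t)" using assms(5) by (simp add: v_def field_simps)
  have s: "sqrt t * sqrt t = t" using assms by simp
  have "Rrho (\<lambda>t. sqrt t) (\<lambda>t. sqrt t * ln t) a b t r =
     4/3 * (((a r + b r * (ln t + 2)) / (2 * sqrt t)) * ((deriv a r + deriv b r * (ln t + 2)) / (2 * sqrt t)))
       / ((a r * sqrt t + b r * (sqrt t * ln t)) * (sqrt t * (deriv a r + deriv b r * ln t)))"
    unfolding Rrho_def Let_def Zdot[OF assms(1)] Zpr[OF assms(2,3)] Zdotpr'[OF assms(1-3)]
    by (simp add: RZ_def)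
  also have "\<dots> = 4/3 * ((b r * (u + 2) / (2 * sqrt t)) * (deriv b r * (v + 2) / (2 * sqrt t)))
       / ((b r * deriv b r) * (u * v) * (sqrt t * sqrt t))"
    unfolding ha hb by (simp add: algebra_simps)
  also have "\<dots> = 1 / (3 * t^2) * ((2 + u) * (2 + v)) / (u * v)"
  proof (cases "u * v = 0")
    case True then show ?thesis by auto
  next
    case False
    define q where "q = sqrt t"
    have q: "q > 0" "t = q * q" using assms by (auto simp: q_def)
    show ?thesis unfolding q_def[symmetric] q(2) using False q(1) assms(4,5) by (simp add: field_simps power2_eq_square)
  qed
  finally show ?thesis unfolding u_def v_def by (simp add: add_ac)
qed

lemma Rrho_uv: assumes "t > 0" "a differentiable at r" "b differentiable at r" "b r \<noteq> 0" "deriv b r \<noteq> 0"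
  "a r / b r + ln t \<noteq> 0" "deriv a r / deriv b r + ln t \<noteq> 0"
  shows "Rrho (\<lambda>t. sqrt t) (\<lambda>t. sqrt t * ln t) a b t r =
    1 / (3 * t^2) * Fn (1 / (a r / b r + ln t)) (1 / (deriv a r / deriv b r + ln t))"
  unfolding Rrho_ab[OF assms(1-5)] Fn_def using assms(6,7) by (simp add: field_simps)

lemma open_T: "open {t::real. 0 < t \<and> c + ln t \<noteq> 0 \<and> d + ln t \<noteq> 0}"
proof -
  have "{t::real. 0 < t \<and> c + ln t \<noteq> 0 \<and> d + ln t \<noteq> 0} = {0<..} - {exp (-c), exp (-d)}"
    by auto (metis add.commute add_eq_0_iff exp_ln)+
  then show ?thesis by (simp add: open_Diff)
qed

definition DP :: "real \<Rightarrow> real \<Rightarrow> real" where "DP P Q = -4*(1+2*Q) - 4*P*(1+2*Q) - 4*Q^2"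
definition DQ :: "real \<Rightarrow> real \<Rightarrow> real" where "DQ P Q = -4*(1+2*P) - 4*P^2 - 4*Q*(1+2*P)"

lemma Dn_chain0:
  assumes "(p has_real_derivative p') (at x)" "(q has_real_derivative q') (at x)"
  shows "((\<lambda>x. Dn (p x) (q x)) has_real_derivative (DP (p x) (q x) * p' + DQ (p x) (q x) * q')) (at x)"
  unfolding Dn_def DP_def DQ_def using assms
  by (auto intro!: derivative_eq_intros simp: algebra_simps power2_eq_square)

lemma Fn_chain0:
  assumes "(p has_real_derivative p') (at x)" "(q has_real_derivative q') (at x)"
  shows "((\<lambda>x. Fn (p x) (q x)) has_real_derivative (2 * (1 + 2 * q x) * p' + 2 * (1 + 2 * p x) * q')) (at x)"
  unfolding Fn_def using assms
  by (auto intro!: derivative_eq_intros simp: algebra_simps power2_eq_square)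

lemma inv_chain:
  assumes "(h has_real_derivative hdv) (at x)" "h x \<noteq> 0"
  shows "((\<lambda>x. k / h x) has_real_derivative (- k * hdv / (h x)^2)) (at x)"
proof -
  have "((\<lambda>x. k * inverse (h x)) has_real_derivative k * (- (hdv * inverse (h x ^ Suc (Suc 0))))) (at x)"
    by (intro DERIV_cmult DERIV_inverse_fun assms)
  moreover have e2: "k * (- (hdv * inverse (h x ^ Suc (Suc 0)))) = - k * hdv / (h x)^2"
    by (simp add: field_simps power2_eq_square)
  moreover have eqf: "(\<lambda>x. k / h x) = (\<lambda>x. k * inverse (h x))" by (simp add: divide_inverse)
  ultimately show ?thesis unfolding eqf by (simp only: e2)
qed

lemma Dn_chain:
  assumes "(p has_real_derivative p') (at x)" "(q has_real_derivative q') (at x)" "Dn (p x) (q x) \<noteq> 0"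
  shows "((\<lambda>x. -2 / Dn (p x) (q x)) has_real_derivative
      2 * (DP (p x) (q x) * p' + DQ (p x) (q x) * q') / (Dn (p x) (q x))^2) (at x)"
  using inv_chain[OF Dn_chain0[OF assms(1,2)] assms(3), of "-2"] by simp

lemma Fn_chain:
  assumes "(p has_real_derivative p') (at x)" "(q has_real_derivative q') (at x)" "Fn (p x) (q x) \<noteq> 0"
  shows "((\<lambda>x. 1 / Fn (p x) (q x)) has_real_derivative
      (- (2 * (1 + 2 * q x) * p' + 2 * (1 + 2 * p x) * q') / (Fn (p x) (q x))^2)) (at x)"
  using inv_chain[OF Fn_chain0[OF assms(1,2)] assms(3), of "1"] by simp

lemma inv_ln_deriv: assumes "t > 0" "c + ln t \<noteq> 0"
  shows "((\<lambda>t. 1 / (c + ln t)) has_real_derivative (- ((1 / (c + ln t))^2 / t))) (at t)"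
  using assms by (auto intro!: derivative_eq_intros simp: field_simps power2_eq_square)

lemma inv_fun_deriv: assumes "(h has_real_derivative hdv) (at r)" "h r + L \<noteq> 0"
  shows "((\<lambda>s. 1 / (h s + L)) has_real_derivative (- ((1 / (h r + L))^2 * hdv))) (at r)"
  using assms by (auto intro!: derivative_eq_intros simp: field_simps power2_eq_square)

lemma Rrho_dot: assumes "t > 0" "a differentiable at r" "b differentiable at r" "b r \<noteq> 0" "deriv b r \<noteq> 0"
  "a r / b r + ln t \<noteq> 0" "deriv a r / deriv b r + ln t \<noteq> 0"
  shows "deriv (\<lambda>t. Rrho (\<lambda>t. sqrt t) (\<lambda>t. sqrt t * ln t) a b t r) t =
    1 / (3 * t^3) * Dn (1 / (a r / b r + ln t)) (1 / (deriv a r / deriv b r + ln t))"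
proof -
  define c where "c = a r / b r"
  define d where "d = deriv a r / deriv b r"
  define T where "T = {t::real. 0 < t \<and> c + ln t \<noteq> 0 \<and> d + ln t \<noteq> 0}"
  have oT: "open T" unfolding T_def by (rule open_T)
  define P where "P = 1 / (c + ln t)"
  define Q where "Q = 1 / (d + ln t)"
  have dP: "((\<lambda>x. 1 / (c + ln x)) has_real_derivative (- (P^2 / t))) (at t)"
    unfolding P_def by (rule inv_ln_deriv) (use assms in \<open>auto simp: c_def\<close>)
  have dQ: "((\<lambda>x. 1 / (d + ln x)) has_real_derivative (- (Q^2 / t))) (at t)"
    unfolding Q_def by (rule inv_ln_deriv) (use assms in \<open>auto simp: d_def\<close>)
  have dF: "((\<lambda>x. Fn (1 / (c + ln x)) (1 / (d + ln x))) has_real_derivative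
      (2 * (1 + 2 * Q) * (- (P^2 / t)) + 2 * (1 + 2 * P) * (- (Q^2 / t)))) (at t)"
    using Fn_chain0[OF dP dQ] unfolding P_def Q_def .
  have d3: "((\<lambda>x. 1 / (3 * x^2)) has_real_derivative (- 2 / (3 * t^3))) (at t)"
    using assms by (auto intro!: derivative_eq_intros simp: field_simps power2_eq_square power3_eq_cube)
  have "((\<lambda>x. 1 / (3 * x^2) * Fn (1 / (c + ln x)) (1 / (d + ln x))) has_real_derivative
        (- 2 / (3 * t^3)) * Fn P Q + (2 * (1 + 2 * Q) * (- (P^2 / t)) + 2 * (1 + 2 * P) * (- (Q^2 / t))) * (1 / (3 * t^2))) (at t)"
    using DERIV_mult[OF d3 dF] unfolding P_def Q_def .
  moreover have "(- 2 / (3 * t^3)) * Fn P Q + (2 * (1 + 2 * Q) * (- (P^2 / t)) + 2 * (1 + 2 * P) * (- (Q^2 / t))) * (1 / (3 * t^2))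
     = 1 / (3 * t^3) * Dn P Q"
    using assms(1) unfolding Fn_def Dn_def by (simp add: field_simps power2_eq_square power3_eq_cube)
  ultimately have "((\<lambda>x. 1 / (3 * x^2) * Fn (1 / (c + ln x)) (1 / (d + ln x))) has_real_derivative
        1 / (3 * t^3) * Dn (1 / (c + ln t)) (1 / (d + ln t))) (at t)" unfolding P_def Q_def by simp
  then have "((\<lambda>t. Rrho (\<lambda>t. sqrt t) (\<lambda>t. sqrt t * ln t) a b t r) has_real_derivative
        1 / (3 * t^3) * Dn (1 / (c + ln t)) (1 / (d + ln t))) (at t)"
  proof (rule has_field_derivative_transform_within_open[OF _ oT])
    show "t \<in> T" using assms by (simp add: T_def c_def d_def)
    fix x assume "x \<in> T"
    then show "1 / (3 * x^2) * Fn (1 / (c + ln x)) (1 / (d + ln x)) = Rrho (\<lambda>t. sqrt t) (\<lambda>t. sqrt t * ln t) a b x r"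
      using Rrho_uv[OF _ assms(2-5)] by (simp add: T_def c_def d_def)
  qed
  then show ?thesis unfolding c_def d_def by (rule DERIV_imp_deriv)
qed

lemma Rchi_uv: assumes "t > 0" "a differentiable at r" "b differentiable at r" "b r \<noteq> 0" "deriv b r \<noteq> 0"
  "a r / b r + ln t \<noteq> 0" "deriv a r / deriv b r + ln t \<noteq> 0"
  shows "Rchi (\<lambda>t. sqrt t) (\<lambda>t. sqrt t * ln t) a b t r = -2 / Dn (1 / (a r / b r + ln t)) (1 / (deriv a r / deriv b r + ln t))"
  unfolding Rchi_def Rrho_dot[OF assms] deriv_Rp_sqrt[OF assms(1)] using assms(1) by (simp add: field_simps)

lemma Rpi_uv: assumes "t > 0" "a differentiable at r" "b differentiable at r" "b r \<noteq> 0" "deriv b r \<noteq> 0"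
  "a r / b r + ln t \<noteq> 0" "deriv a r / deriv b r + ln t \<noteq> 0"
  shows "Rpi (\<lambda>t. sqrt t) (\<lambda>t. sqrt t * ln t) a b t r = 1 / Fn (1 / (a r / b r + ln t)) (1 / (deriv a r / deriv b r + ln t))"
  unfolding Rpi_def Rrho_uv[OF assms] Rp_sqrt[OF assms(1)] using assms(1) by (simp add: field_simps)

lemma wedge_alg:
  assumes "t > 0" "Dn P Q \<noteq> 0" "Fn P Q \<noteq> 0"
  shows "(2 * (DP P Q * (- (P^2 / t)) + DQ P Q * (- (Q^2 / t))) / (Dn P Q)^2) *
         (- (2 * (1 + 2 * Q) * (- (P^2 * ad)) + 2 * (1 + 2 * P) * (- (Q^2 * bd))) / (Fn P Q)^2)
       - (2 * (DP P Q * (- (P^2 * ad)) + DQ P Q * (- (Q^2 * bd))) / (Dn P Q)^2) *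
         (- (2 * (1 + 2 * Q) * (- (P^2 / t)) + 2 * (1 + 2 * P) * (- (Q^2 / t))) / (Fn P Q)^2)
     = -16 * (Q - P) * (1 + P + Q + 2 * P * Q) * P^2 * Q^2 * (bd - ad) / (t * (Dn P Q)^2 * (Fn P Q)^2)"
proof -
  have t0: "t \<noteq> 0" using assms by simp
  have gen: "\<And>m1 m2 n1 n2 x y::real. (2*m1/x)*(-n2/y) - (2*m2/x)*(-n1/y) = -2*(m1*n2 - m2*n1)/(x*y)"
    by (simp add: field_simps) (simp add: add_divide_distrib[symmetric])
  have pol: "(DP P Q * (- (P^2 / t)) + DQ P Q * (- (Q^2 / t))) * (2 * (1 + 2 * Q) * (- (P^2 * ad)) + 2 * (1 + 2 * P) * (- (Q^2 * bd)))
     - (DP P Q * (- (P^2 * ad)) + DQ P Q * (- (Q^2 * bd))) * (2 * (1 + 2 * Q) * (- (P^2 / t)) + 2 * (1 + 2 * P) * (- (Q^2 / t)))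
     = 8 * (Q - P) * (1 + P + Q + 2 * P * Q) * P^2 * Q^2 * (bd - ad) / t"
  proof -
    have g2: "\<And>a1 a2 b1 b2 x y z w::real. (a1*x + a2*y)*(b1*z+b2*w) - (a1*z+a2*w)*(b1*x+b2*y) = (a1*b2 - a2*b1)*(x*w - y*z)"
      by algebra
    have g3: "DP P Q * (2 * (1 + 2 * P)) - DQ P Q * (2 * (1 + 2 * Q)) = 8 * (Q - P) * (1 + P + Q + 2 * P * Q)"
      unfolding DP_def DQ_def by algebra
    have g4: "(- (P^2 / t)) * (- (Q^2 * bd)) - (- (Q^2 / t)) * (- (P^2 * ad)) = P^2 * Q^2 * (bd - ad) / t"
      using t0 by (simp add: field_simps)
    show ?thesis
      unfolding g2[of "DP P Q" _ "DQ P Q" _ "2 * (1 + 2 * Q)" _ "2 * (1 + 2 * P)"] g3 g4 by simp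
  qed
  show ?thesis unfolding gen pol using t0 by (simp add: field_simps)
qed

lemma wedge_formula:
  fixes a b :: "real \<Rightarrow> real"
  assumes U: "open U" and da: "\<forall>s\<in>U. a differentiable at s" and db: "\<forall>s\<in>U. b differentiable at s"
    and bnz: "\<forall>s\<in>U. b s \<noteq> 0" and dbnz: "\<forall>s\<in>U. deriv b s \<noteq> 0"
    and cal: "continuous_on U (\<lambda>s. a s / b s)" and cbe: "continuous_on U (\<lambda>s. deriv a s / deriv b s)"
    and dal: "((\<lambda>s. a s / b s) has_real_derivative ad) (at r)"
    and dbe: "((\<lambda>s. deriv a s / deriv b s) has_real_derivative bd) (at r)"
    and r: "r \<in> U" and t: "t > 0"
    and u: "a r / b r + ln t \<noteq> 0" and v: "deriv a r / deriv b r + ln t \<noteq> 0"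
    and DnF: "Dn (1 / (a r / b r + ln t)) (1 / (deriv a r / deriv b r + ln t)) \<noteq> 0"
    and FnF: "Fn (1 / (a r / b r + ln t)) (1 / (deriv a r / deriv b r + ln t)) \<noteq> 0"
  shows "wedge_coeff (Rchi (\<lambda>t. sqrt t) (\<lambda>t. sqrt t * ln t) a b) (Rpi (\<lambda>t. sqrt t) (\<lambda>t. sqrt t * ln t) a b) t r
    = (let P = 1 / (a r / b r + ln t); Q = 1 / (deriv a r / deriv b r + ln t) in
        -16 * (Q - P) * (1 + P + Q + 2 * P * Q) * P^2 * Q^2 * (bd - ad) / (t * (Dn P Q)^2 * (Fn P Q)^2))"
proof -
  define c where "c = a r / b r"
  define d where "d = deriv a r / deriv b r"
  define L where "L = ln t"
  define P where "P = 1 / (c + L)"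
  define Q where "Q = 1 / (d + L)"
  define T where "T = {t::real. 0 < t \<and> c + ln t \<noteq> 0 \<and> d + ln t \<noteq> 0}"
  have oT: "open T" unfolding T_def by (rule open_T)
  have tT: "t \<in> T" using t u v by (simp add: T_def c_def d_def)
  define S where "S = U \<inter> (\<lambda>s. (a s / b s + L) * (deriv a s / deriv b s + L)) -` (- {0})"
  have oS: "open S" unfolding S_def
    by (rule continuous_open_preimage) (auto intro!: continuous_intros cal cbe U)
  have rS: "r \<in> S" using r u v by (simp add: S_def L_def)
  have dar: "a differentiable at r" "b differentiable at r" using da db r by auto
  have dPt: "((\<lambda>x. 1 / (c + ln x)) has_real_derivative (- (P^2 / t))) (at t)"
    unfolding P_def L_def by (rule inv_ln_deriv) (use t u in \<open>auto simp: c_def\<close>)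
  have dQt: "((\<lambda>x. 1 / (d + ln x)) has_real_derivative (- (Q^2 / t))) (at t)"
    unfolding Q_def L_def by (rule inv_ln_deriv) (use t v in \<open>auto simp: d_def\<close>)
  have dPs: "((\<lambda>s. 1 / (a s / b s + L)) has_real_derivative (- (P^2 * ad))) (at r)"
    unfolding P_def c_def by (rule inv_fun_deriv[OF dal]) (use u in \<open>simp add: L_def\<close>)
  have dQs: "((\<lambda>s. 1 / (deriv a s / deriv b s + L)) has_real_derivative (- (Q^2 * bd))) (at r)"
    unfolding Q_def d_def by (rule inv_fun_deriv[OF dbe]) (use v in \<open>simp add: L_def\<close>)
  have Dn0: "Dn P Q \<noteq> 0" using DnF by (simp add: P_def Q_def c_def d_def L_def)
  have Fn0: "Fn P Q \<noteq> 0" using FnF by (simp add: P_def Q_def c_def d_def L_def)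
  have chit: "((\<lambda>x. Rchi (\<lambda>t. sqrt t) (\<lambda>t. sqrt t * ln t) a b x r) has_real_derivative
      2 * (DP P Q * (- (P^2 / t)) + DQ P Q * (- (Q^2 / t))) / (Dn P Q)^2) (at t)"
  proof (rule has_field_derivative_transform_within_open[OF _ oT tT])
    show "((\<lambda>x. -2 / Dn (1 / (c + ln x)) (1 / (d + ln x))) has_real_derivative
      2 * (DP P Q * (- (P^2 / t)) + DQ P Q * (- (Q^2 / t))) / (Dn P Q)^2) (at t)"
      using Dn_chain[OF dPt dQt] Dn0 unfolding P_def Q_def L_def by simp
    fix x assume "x \<in> T"
    then show "-2 / Dn (1 / (c + ln x)) (1 / (d + ln x)) = Rchi (\<lambda>t. sqrt t) (\<lambda>t. sqrt t * ln t) a b x r"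
      using Rchi_uv[OF _ dar bnz[rule_format, OF r] dbnz[rule_format, OF r]] by (simp add: T_def c_def d_def)
  qed
  have pit: "((\<lambda>x. Rpi (\<lambda>t. sqrt t) (\<lambda>t. sqrt t * ln t) a b x r) has_real_derivative
      (- (2 * (1 + 2 * Q) * (- (P^2 / t)) + 2 * (1 + 2 * P) * (- (Q^2 / t))) / (Fn P Q)^2)) (at t)"
  proof (rule has_field_derivative_transform_within_open[OF _ oT tT])
    show "((\<lambda>x. 1 / Fn (1 / (c + ln x)) (1 / (d + ln x))) has_real_derivative
      (- (2 * (1 + 2 * Q) * (- (P^2 / t)) + 2 * (1 + 2 * P) * (- (Q^2 / t))) / (Fn P Q)^2)) (at t)"
      using Fn_chain[OF dPt dQt] Fn0 unfolding P_def Q_def L_def by simp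
    fix x assume "x \<in> T"
    then show "1 / Fn (1 / (c + ln x)) (1 / (d + ln x)) = Rpi (\<lambda>t. sqrt t) (\<lambda>t. sqrt t * ln t) a b x r"
      using Rpi_uv[OF _ dar bnz[rule_format, OF r] dbnz[rule_format, OF r]] by (simp add: T_def c_def d_def)
  qed
  have chis: "((\<lambda>s. Rchi (\<lambda>t. sqrt t) (\<lambda>t. sqrt t * ln t) a b t s) has_real_derivative
      2 * (DP P Q * (- (P^2 * ad)) + DQ P Q * (- (Q^2 * bd))) / (Dn P Q)^2) (at r)"
  proof (rule has_field_derivative_transform_within_open[OF _ oS rS])
    show "((\<lambda>s. -2 / Dn (1 / (a s / b s + L)) (1 / (deriv a s / deriv b s + L))) has_real_derivative
      2 * (DP P Q * (- (P^2 * ad)) + DQ P Q * (- (Q^2 * bd))) / (Dn P Q)^2) (at r)"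
      using Dn_chain[OF dPs dQs] Dn0 unfolding P_def Q_def c_def d_def by simp
    fix x assume x: "x \<in> S"
    then have "x \<in> U" by (simp add: S_def)
    then show "-2 / Dn (1 / (a x / b x + L)) (1 / (deriv a x / deriv b x + L)) = Rchi (\<lambda>t. sqrt t) (\<lambda>t. sqrt t * ln t) a b t x"
      using Rchi_uv[OF t _ _ bnz[rule_format] dbnz[rule_format]] da db x by (simp add: S_def L_def)
  qed
  have pis: "((\<lambda>s. Rpi (\<lambda>t. sqrt t) (\<lambda>t. sqrt t * ln t) a b t s) has_real_derivative
      (- (2 * (1 + 2 * Q) * (- (P^2 * ad)) + 2 * (1 + 2 * P) * (- (Q^2 * bd))) / (Fn P Q)^2)) (at r)"
  proof (rule has_field_derivative_transform_within_open[OF _ oS rS])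
    show "((\<lambda>s. 1 / Fn (1 / (a s / b s + L)) (1 / (deriv a s / deriv b s + L))) has_real_derivative
      (- (2 * (1 + 2 * Q) * (- (P^2 * ad)) + 2 * (1 + 2 * P) * (- (Q^2 * bd))) / (Fn P Q)^2)) (at r)"
      using Fn_chain[OF dPs dQs] Fn0 unfolding P_def Q_def c_def d_def by simp
    fix x assume x: "x \<in> S"
    then have "x \<in> U" by (simp add: S_def)
    then show "1 / Fn (1 / (a x / b x + L)) (1 / (deriv a x / deriv b x + L)) = Rpi (\<lambda>t. sqrt t) (\<lambda>t. sqrt t * ln t) a b t x"
      using Rpi_uv[OF t _ _ bnz[rule_format] dbnz[rule_format]] da db x by (simp add: S_def L_def)
  qed
  have "wedge_coeff (Rchi (\<lambda>t. sqrt t) (\<lambda>t. sqrt t * ln t) a b) (Rpi (\<lambda>t. sqrt t) (\<lambda>t. sqrt t * ln t) a b) t r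
    = -16 * (Q - P) * (1 + P + Q + 2 * P * Q) * P^2 * Q^2 * (bd - ad) / (t * (Dn P Q)^2 * (Fn P Q)^2)"
    unfolding wedge_coeff_def DERIV_imp_deriv[OF chit] DERIV_imp_deriv[OF pit] DERIV_imp_deriv[OF chis] DERIV_imp_deriv[OF pis]
    by (rule wedge_alg[OF t Dn0 Fn0])
  then show ?thesis unfolding P_def Q_def c_def d_def L_def Let_def .
qed

lemma Rdom_facts:
  assumes da: "\<forall>s\<in>U. a differentiable at s" and db: "\<forall>s\<in>U. b differentiable at s"
    and bnz: "\<forall>s\<in>U. b s \<noteq> 0" and dbnz: "\<forall>s\<in>U. deriv b s \<noteq> 0"
    and m: "(t, r) \<in> Rdom (\<lambda>t. sqrt t) (\<lambda>t. sqrt t * ln t) a b U"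
  shows "t > 0" "r \<in> U" "a r / b r + ln t \<noteq> 0" "deriv a r / deriv b r + ln t \<noteq> 0"
    "Dn (1 / (a r / b r + ln t)) (1 / (deriv a r / deriv b r + ln t)) \<noteq> 0"
    "Fn (1 / (a r / b r + ln t)) (1 / (deriv a r / deriv b r + ln t)) \<noteq> 0"
proof -
  show t: "t > 0" and r: "r \<in> U" using m by (auto simp: Rdom_def)
  have dar: "a differentiable at r" "b differentiable at r" using da db r by auto
  have b0: "b r \<noteq> 0" "deriv b r \<noteq> 0" using bnz dbnz r by auto
  have "RZ (\<lambda>t. sqrt t) (\<lambda>t. sqrt t * ln t) a b t r \<noteq> 0" using m by (auto simp: Rdom_def)
  moreover have "RZ (\<lambda>t. sqrt t) (\<lambda>t. sqrt t * ln t) a b t r = sqrt t * b r * (a r / b r + ln t)"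
    using b0 by (simp add: RZ_def field_simps)
  ultimately show u: "a r / b r + ln t \<noteq> 0" by auto
  have "deriv (\<lambda>s. RZ (\<lambda>t. sqrt t) (\<lambda>t. sqrt t * ln t) a b t s) r \<noteq> 0" using m by (auto simp: Rdom_def)
  moreover have "deriv (\<lambda>s. RZ (\<lambda>t. sqrt t) (\<lambda>t. sqrt t * ln t) a b t s) r = sqrt t * deriv b r * (deriv a r / deriv b r + ln t)"
    unfolding Zpr[OF dar] using b0 by (simp add: field_simps)
  ultimately show v: "deriv a r / deriv b r + ln t \<noteq> 0" by auto
  have "Rrho (\<lambda>t. sqrt t) (\<lambda>t. sqrt t * ln t) a b t r \<noteq> 0" using m by (auto simp: Rdom_def)
  then show "Fn (1 / (a r / b r + ln t)) (1 / (deriv a r / deriv b r + ln t)) \<noteq> 0"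
    unfolding Rrho_uv[OF t dar b0 u v] by auto
  have "deriv (\<lambda>t. Rrho (\<lambda>t. sqrt t) (\<lambda>t. sqrt t * ln t) a b t r) t \<noteq> 0" using m by (auto simp: Rdom_def)
  then show "Dn (1 / (a r / b r + ln t)) (1 / (deriv a r / deriv b r + ln t)) \<noteq> 0"
    unfolding Rrho_dot[OF t dar b0 u v] by auto
qed

lemma Rdom_intro:
  assumes dar: "a differentiable at r" "b differentiable at r"
    and b0: "b r \<noteq> 0" "deriv b r \<noteq> 0" and t: "t > 0" and r: "r \<in> U"
    and u: "a r / b r + ln t \<noteq> 0" and v: "deriv a r / deriv b r + ln t \<noteq> 0"
    and D: "Dn (1 / (a r / b r + ln t)) (1 / (deriv a r / deriv b r + ln t)) \<noteq> 0"
    and F: "Fn (1 / (a r / b r + ln t)) (1 / (deriv a r / deriv b r + ln t)) \<noteq> 0"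
  shows "(t, r) \<in> Rdom (\<lambda>t. sqrt t) (\<lambda>t. sqrt t * ln t) a b U"
proof -
  have "RZ (\<lambda>t. sqrt t) (\<lambda>t. sqrt t * ln t) a b t r = sqrt t * b r * (a r / b r + ln t)"
    using b0 by (simp add: RZ_def field_simps)
  moreover have "deriv (\<lambda>s. RZ (\<lambda>t. sqrt t) (\<lambda>t. sqrt t * ln t) a b t s) r = sqrt t * deriv b r * (deriv a r / deriv b r + ln t)"
    unfolding Zpr[OF dar] using b0 by (simp add: field_simps)
  ultimately show ?thesis unfolding Rdom_def
    using Rrho_uv[OF t dar b0 u v] Rrho_dot[OF t dar b0 u v] t r u v b0 D F by simp
qed

theorem mainTheorem9:
  fixes a b :: "real \<Rightarrow> real" and U :: "real set"
  defines "f \<equiv> (\<lambda>\<tau>. sqrt \<tau>)"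
      and "g \<equiv> (\<lambda>\<tau>. sqrt \<tau> * ln \<tau>)"
      and "\<alpha> \<equiv> (\<lambda>r. a r / b r)"
      and "\<beta> \<equiv> (\<lambda>r. deriv a r / deriv b r)"
  assumes U: "open U" "connected U" "U \<noteq> {}"
      and smooth: "smooth_on U a" "smooth_on U b"
      and b_nz: "\<forall>r\<in>U. b r \<noteq> 0"
      and db_nz: "\<forall>r\<in>U. deriv b r \<noteq> 0"
      and nonconst: "\<not> (\<exists>k. \<forall>r\<in>U. \<alpha> r = k)"
  shows "((\<forall>(\<tau>, r)\<in>Rdom f g a b U. wedge_coeff (Rchi f g a b) (Rpi f g a b) \<tau> r = 0)
            \<longleftrightarrow> (\<exists>c. \<forall>r\<in>U. \<beta> r = \<alpha> r + c))
       \<and> (\<forall>c. (\<forall>r\<in>U. \<beta> r = \<alpha> r + c) \<longrightarrow>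
            c \<noteq> 0
          \<and> (\<exists>K. \<forall>r\<in>U. b r = K * exp (\<alpha> r / c))
          \<and> (\<forall>\<tau>>0. Rp f \<tau> = 1 / (3 * \<tau>\<^sup>2))
          \<and> (\<forall>\<tau>>0. \<forall>r\<in>U. Rrho f g a b \<tau> r =
                1 / (3 * \<tau>\<^sup>2) * ((2 + \<alpha> r + ln \<tau>) * (2 + \<alpha> r + c + ln \<tau>))
                  / ((\<alpha> r + ln \<tau>) * (\<alpha> r + c + ln \<tau>))))"
proof -
  have da: "\<forall>s\<in>U. a differentiable at s" using smooth(1) unfolding smooth_on_def by (metis funpow_0)
  have db: "\<forall>s\<in>U. b differentiable at s" using smooth(2) unfolding smooth_on_def by (metis funpow_0)
  have dda: "\<forall>s\<in>U. deriv a differentiable at s" using smooth(1) unfolding smooth_on_def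
    by (metis funpow_0 funpow_Suc_right comp_apply One_nat_def)
  have ddb: "\<forall>s\<in>U. deriv b differentiable at s" using smooth(2) unfolding smooth_on_def
    by (metis funpow_0 funpow_Suc_right comp_apply One_nat_def)
  have al_eq: "\<alpha> = (\<lambda>s. a s / b s)" by (simp add: \<alpha>_def)
  have be_eq: "\<beta> = (\<lambda>s. deriv a s / deriv b s)" by (simp add: \<beta>_def)
  have dal0: "(\<alpha> has_real_derivative (deriv b r * (\<beta> r - \<alpha> r) / b r)) (at r)" if r: "r \<in> U" for r
  proof -
    have "(\<alpha> has_real_derivative ((deriv a r * b r - a r * deriv b r) / (b r * b r))) (at r)"
      unfolding al_eq using da db b_nz r
      by (auto intro!: derivative_eq_intros simp: DERIV_deriv_iff_real_differentiable[symmetric])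
    moreover have "(deriv a r * b r - a r * deriv b r) / (b r * b r) = deriv b r * (\<beta> r - \<alpha> r) / b r"
      using b_nz db_nz r by (simp add: \<alpha>_def \<beta>_def field_simps)
    ultimately show ?thesis by simp
  qed
  have dal: "(\<alpha> has_real_derivative deriv \<alpha> r) (at r)" if r: "r \<in> U" for r
    using dal0[OF r] DERIV_imp_deriv by metis
  have dbe: "(\<beta> has_real_derivative deriv \<beta> r) (at r)" if r: "r \<in> U" for r
  proof -
    have "(\<beta> has_real_derivative ((deriv (deriv a) r * deriv b r - deriv a r * deriv (deriv b) r) / (deriv b r * deriv b r))) (at r)"
      unfolding be_eq using dda ddb db_nz r
      by (auto intro!: derivative_eq_intros simp: DERIV_deriv_iff_real_differentiable[symmetric])
    then show ?thesis using DERIV_imp_deriv by metis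
  qed
  have cal: "continuous_on U \<alpha>"
    by (rule continuous_at_imp_continuous_on) (use dal DERIV_isCont in blast)
  have cbe: "continuous_on U \<beta>"
    by (rule continuous_at_imp_continuous_on) (use dbe DERIV_isCont in blast)
  have key: "wedge_coeff (Rchi f g a b) (Rpi f g a b) t r =
      (let P = 1 / (\<alpha> r + ln t); Q = 1 / (\<beta> r + ln t) in
        -16 * (Q - P) * (1 + P + Q + 2 * P * Q) * P^2 * Q^2 * (deriv \<beta> r - deriv \<alpha> r) / (t * (Dn P Q)^2 * (Fn P Q)^2))"
    if m: "(t, r) \<in> Rdom f g a b U" for t r
  proof -
    note F = Rdom_facts[OF da db b_nz db_nz m[unfolded f_def g_def]]
    show ?thesis unfolding f_def g_def
      using wedge_formula[OF U(1) da db b_nz db_nz cal[unfolded al_eq] cbe[unfolded be_eq]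
         dal[OF F(2), unfolded al_eq] dbe[OF F(2), unfolded be_eq] F(2) F(1) F(3-6)] by (simp add: \<alpha>_def \<beta>_def)
  qed
  have part1: "(\<forall>(\<tau>, r)\<in>Rdom f g a b U. wedge_coeff (Rchi f g a b) (Rpi f g a b) \<tau> r = 0)
            \<longleftrightarrow> (\<exists>c. \<forall>r\<in>U. \<beta> r = \<alpha> r + c)"
  proof
    assume W: "\<forall>(\<tau>, r)\<in>Rdom f g a b U. wedge_coeff (Rchi f g a b) (Rpi f g a b) \<tau> r = 0"
    define h where "h = (\<lambda>s. \<beta> s - \<alpha> s)"
    have hz: "deriv \<beta> r - deriv \<alpha> r = 0" if r: "r \<in> U" and hr: "h r \<noteq> 0" for r
    proof (rule ccontr)
      assume nz: "deriv \<beta> r - deriv \<alpha> r \<noteq> 0"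
      define m where "m = 10 + \<bar>h r\<bar>"
      define t where "t = exp (m - \<alpha> r)"
      have t0: "t > 0" by (simp add: t_def)
      have lt: "ln t = m - \<alpha> r" by (simp add: t_def)
      have u: "\<alpha> r + ln t = m" using lt by simp
      have v: "\<beta> r + ln t = m + h r" using lt by (simp add: h_def)
      have m10: "m \<ge> 10" "m + h r \<ge> 10" by (auto simp: m_def)
      define P where "P = 1 / m"
      define Q where "Q = 1 / (m + h r)"
      have P0: "P > 0" and Q0: "Q > 0" using m10 by (auto simp: P_def Q_def)
      have PQ: "Q - P \<noteq> 0"
      proof
        assume "Q - P = 0"
        then have "1 / (m + h r) = 1 / m" by (simp add: P_def Q_def)
        then have "m + h r = m" using m10 by (simp add: field_simps)
        then show False using hr by simp
      qed
      have Fp: "Fn P Q > 0" using P0 Q0 by (simp add: Fn_def)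
      have Dm: "Dn P Q < 0"
      proof -
        have "(1 + 2*P) * (1 + 2*Q) > 0" "P^2 * (1 + 2*Q) \<ge> 0" "Q^2 * (1 + 2*P) \<ge> 0" using P0 Q0 by auto
        then show ?thesis unfolding Dn_def by linarith
      qed
      have rab: "a r / b r + ln t \<noteq> 0" "deriv a r / deriv b r + ln t \<noteq> 0"
        using u v m10 by (auto simp: \<alpha>_def \<beta>_def)
      have PQ': "1 / (a r / b r + ln t) = P" "1 / (deriv a r / deriv b r + ln t) = Q"
        using u v by (auto simp: \<alpha>_def \<beta>_def P_def Q_def)
      have mem: "(t, r) \<in> Rdom f g a b U" unfolding f_def g_def
        by (rule Rdom_intro) (use da db b_nz db_nz r t0 rab PQ' Dm Fp in auto)
      have "wedge_coeff (Rchi f g a b) (Rpi f g a b) t r = 0" using W mem by auto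
      moreover have "wedge_coeff (Rchi f g a b) (Rpi f g a b) t r =
          -16 * (Q - P) * (1 + P + Q + 2 * P * Q) * P^2 * Q^2 * (deriv \<beta> r - deriv \<alpha> r) / (t * (Dn P Q)^2 * (Fn P Q)^2)"
        unfolding key[OF mem] Let_def u v P_def Q_def ..
      moreover have "1 + P + Q + 2 * P * Q > 0" using P0 Q0 by (simp add: add_pos_pos)
      ultimately show False using PQ nz t0 Dm Fp P0 Q0 by auto
    qed
    have dh: "(h has_real_derivative (deriv \<beta> x - deriv \<alpha> x)) (at x)" if "x \<in> U" for x
      unfolding h_def using dal[OF that] dbe[OF that] by (auto intro!: derivative_eq_intros)
    have ch: "continuous_on U h" unfolding h_def using cal cbe by (intro continuous_intros)
    have "\<forall>x\<in>U - {}. ((\<lambda>s. h s * h s) has_real_derivative 0) (at x)"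
    proof
      fix x assume x: "x \<in> U - {}"
      have "((\<lambda>s. h s * h s) has_real_derivative ((deriv \<beta> x - deriv \<alpha> x) * h x + (deriv \<beta> x - deriv \<alpha> x) * h x)) (at x)"
        using DERIV_mult[OF dh dh] x by auto
      moreover have "(deriv \<beta> x - deriv \<alpha> x) * h x = 0" using hz x by (cases "h x = 0") auto
      ultimately show "((\<lambda>s. h s * h s) has_real_derivative 0) (at x)" by simp
    qed
    moreover have chh: "continuous_on U (\<lambda>s. h s * h s)" using ch by (intro continuous_on_mult)
    ultimately obtain k where hk: "\<And>x. x \<in> U \<Longrightarrow> h x * h x = k"
      using DERIV_zero_connected_constant[OF U(2) U(1) finite.emptyI chh] by blast
    show "\<exists>c. \<forall>r\<in>U. \<beta> r = \<alpha> r + c"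
    proof (cases "k = 0")
      case True
      then have "\<forall>r\<in>U. \<beta> r = \<alpha> r + 0" using hk by (auto simp: h_def)
      then show ?thesis by blast
    next
      case False
      then have hnz: "\<forall>x\<in>U. h x \<noteq> 0" using hk by force
      have "\<forall>x\<in>U - {}. (h has_real_derivative 0) (at x)" using dh hz hnz by fastforce
      then obtain c where "\<And>x. x \<in> U \<Longrightarrow> h x = c"
        using DERIV_zero_connected_constant[OF U(2) U(1) finite.emptyI ch] by blast
      then have "\<forall>r\<in>U. \<beta> r = \<alpha> r + c" by (force simp: h_def)
      then show ?thesis by blast
    qed
  next
    assume "\<exists>c. \<forall>r\<in>U. \<beta> r = \<alpha> r + c"
    then obtain c where hc: "\<forall>r\<in>U. \<beta> r = \<alpha> r + c" by blast
    show "\<forall>(\<tau>, r)\<in>Rdom f g a b U. wedge_coeff (Rchi f g a b) (Rpi f g a b) \<tau> r = 0"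
    proof (clarify)
      fix t r assume m: "(t, r) \<in> Rdom f g a b U"
      then have r: "r \<in> U" by (simp add: Rdom_def)
      have "((\<lambda>s. \<alpha> s + c) has_real_derivative deriv \<alpha> r) (at r)"
        using dal[OF r] by (auto intro!: derivative_eq_intros)
      then have "(\<beta> has_real_derivative deriv \<alpha> r) (at r)"
        by (rule has_field_derivative_transform_within_open[OF _ U(1) r]) (use hc in auto)
      then have "deriv \<beta> r = deriv \<alpha> r" using dbe[OF r] DERIV_unique by metis
      then show "wedge_coeff (Rchi f g a b) (Rpi f g a b) t r = 0" unfolding key[OF m] by (simp add: Let_def)
    qed
  qed
  have part2: "c \<noteq> 0
          \<and> (\<exists>K. \<forall>r\<in>U. b r = K * exp (\<alpha> r / c))
          \<and> (\<forall>\<tau>>0. Rp f \<tau> = 1 / (3 * \<tau>\<^sup>2))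
          \<and> (\<forall>\<tau>>0. \<forall>r\<in>U. Rrho f g a b \<tau> r =
                1 / (3 * \<tau>\<^sup>2) * ((2 + \<alpha> r + ln \<tau>) * (2 + \<alpha> r + c + ln \<tau>))
                  / ((\<alpha> r + ln \<tau>) * (\<alpha> r + c + ln \<tau>)))"
    if hc: "\<forall>r\<in>U. \<beta> r = \<alpha> r + c" for c
  proof (intro conjI)
    have dalc: "(\<alpha> has_real_derivative (deriv b r * c / b r)) (at r)" if r: "r \<in> U" for r
      using dal0[OF r] hc r by simp
    show c0: "c \<noteq> 0"
    proof
      assume "c = 0"
      then have "\<forall>x\<in>U - {}. (\<alpha> has_real_derivative 0) (at x)" using dalc by simp
      then obtain k where "\<And>x. x \<in> U \<Longrightarrow> \<alpha> x = k"
        using DERIV_zero_connected_constant[OF U(2) U(1) finite.emptyI cal] by blast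
      with nonconst show False by blast
    qed
    show "\<exists>K. \<forall>r\<in>U. b r = K * exp (\<alpha> r / c)"
    proof -
      define G where "G = (\<lambda>s. b s * exp (- (\<alpha> s / c)))"
      have dG: "(G has_real_derivative 0) (at x)" if x: "x \<in> U" for x
      proof -
        have dbx: "(b has_real_derivative deriv b x) (at x)"
          using db x by (simp add: DERIV_deriv_iff_real_differentiable)
        have bx: "b x \<noteq> 0" using b_nz x by blast
        show ?thesis unfolding G_def using c0 bx
          by (auto intro!: derivative_eq_intros dbx dalc[OF x] simp: field_simps)
      qed
      have cG: "continuous_on U G"
        by (rule continuous_at_imp_continuous_on) (use dG DERIV_isCont in blast)
      obtain K where K: "\<And>x. x \<in> U \<Longrightarrow> G x = K"
        using DERIV_zero_connected_constant[OF U(2) U(1) finite.emptyI cG] dG by blast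
      have "\<forall>r\<in>U. b r = K * exp (\<alpha> r / c)"
      proof
        fix r assume r: "r \<in> U"
        have "K * exp (\<alpha> r / c) = b r * (exp (- (\<alpha> r / c)) * exp (\<alpha> r / c))"
          using K[OF r] by (simp add: G_def)
        also have "exp (- (\<alpha> r / c)) * exp (\<alpha> r / c) = 1" by (simp add: exp_minus field_simps)
        finally show "b r = K * exp (\<alpha> r / c)" by simp
      qed
      then show ?thesis by blast
    qed
    show "\<forall>\<tau>>0. Rp f \<tau> = 1 / (3 * \<tau>\<^sup>2)" unfolding f_def using Rp_sqrt by blast
    show "\<forall>\<tau>>0. \<forall>r\<in>U. Rrho f g a b \<tau> r =
                1 / (3 * \<tau>\<^sup>2) * ((2 + \<alpha> r + ln \<tau>) * (2 + \<alpha> r + c + ln \<tau>))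
                  / ((\<alpha> r + ln \<tau>) * (\<alpha> r + c + ln \<tau>))"
    proof (intro allI impI ballI)
      fix t :: real and r assume t: "t > 0" and r: "r \<in> U"
      have "Rrho f g a b t r = 1 / (3 * t^2) * ((2 + \<alpha> r + ln t) * (2 + \<beta> r + ln t))
                  / ((\<alpha> r + ln t) * (\<beta> r + ln t))"
        unfolding f_def g_def \<alpha>_def \<beta>_def
        by (rule Rrho_ab) (use t r da db b_nz db_nz in auto)
      also have "\<beta> r = \<alpha> r + c" using hc r by blast
      finally show "Rrho f g a b t r = 1 / (3 * t\<^sup>2) * ((2 + \<alpha> r + ln t) * (2 + \<alpha> r + c + ln t))
                  / ((\<alpha> r + ln t) * (\<alpha> r + c + ln t))" by (simp add: add.assoc)
    qed
  qed
  show ?thesis using part1 part2 by blast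
qed

end
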